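(* In a monotonous quiver, if $X$ and $Y$ are isotypic phylogenetic vertices, then any universal evolution for $X$ and any universal evolution for $Y$ are isotypic (they have the same length $m$ and, writing them as $A_0\leftarrow\cdots\leftarrow A_m=X$ and $B_0\leftarrow\cdots\leftarrow B_m=Y$, one has $A_k\sim B_k$ for all $k=0,\dots,m$).
   Context: A quiver consists of a class of vertices and, for each ordered pair of vertices $(A,B)$, a set of edges $A\to B$ (loops and multiple edges allowed). An evolution of length $m\ge 0$ is a sequence $A_0\leftarrow A_1\leftarrow\cdots\leftarrow A_m$ of vertices together with edges $A_k\to A_{k-1}$ ($1\le k\le m$); $A_0$ is its initial and $A_m$ its terminal vertex. Write $A\le B$ ($A$ is an ancestor of $B$) if there is an evolution with initial vertex $A$ and terminal vertex $B$; $A,B$ are isotypic ($A\sim B$) if $A\le B$ and $B\le A$. A vertex $A$ is primitive if every ancestor of $A$ is isotypic to $A$. A full evolution for $X$ is an evolution with primitive initial vertex and terminal vertex $X$. The height $h(X)$ is the smallest length of a full evolution for $X$ ($\infty$ if none). An evolution $\alpha=(A_0\leftarrow\cdots\leftarrow A_m)$ embeds in $\beta=(B_0\leftarrow\cdots\leftarrow B_n)$ if $m\le n$ and there are $0\le r_0<\cdots<r_m\le n$ with $A_k\sim B_{r_k}$. A universal evolution for $X$ is a full evolution for $X$ embedding in every full evolution for $X$; $X$ is phylogenetic if one exists. A quiver is monotonous if $h(A)\ge h(B)$ for every edge $A\to B$. *)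

theory Defs
  imports Main "HOL-Library.Extended_Nat"
begin

text \<open>A quiver: vertices are the elements of type 'v, and E A B is the set of edges A \<rightarrow> B.
An evolution A_0 <- A_1 <- ... <- A_m is a pair (vs, es) with vs = [A_0,...,A_m]
and es = [e_1,...,e_m] where e_k is an edge A_k \<rightarrow> A_(k-1) (stored at index k-1).\<close>

type_synonym ('v,'e) quiver = "'v \<Rightarrow> 'v \<Rightarrow> 'e set"
type_synonym ('v,'e) evolution = "'v list \<times> 'e list"

definition is_evol :: "('v,'e) quiver \<Rightarrow> ('v,'e) evolution \<Rightarrow> bool" where
  "is_evol E ev \<longleftrightarrow> fst ev \<noteq> [] \<and> length (snd ev) = length (fst ev) - 1 \<and>
     (\<forall>k < length (snd ev). snd ev ! k \<in> E (fst ev ! Suc k) (fst ev ! k))"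

definition evlen :: "('v,'e) evolution \<Rightarrow> nat" where
  "evlen ev = length (snd ev)"

definition vtx :: "('v,'e) evolution \<Rightarrow> nat \<Rightarrow> 'v" where
  "vtx ev k = fst ev ! k"

definition initial :: "('v,'e) evolution \<Rightarrow> 'v" where
  "initial ev = hd (fst ev)"

definition terminal :: "('v,'e) evolution \<Rightarrow> 'v" where
  "terminal ev = last (fst ev)"

definition ancestor :: "('v,'e) quiver \<Rightarrow> 'v \<Rightarrow> 'v \<Rightarrow> bool" where
  "ancestor E A B \<longleftrightarrow> (\<exists>ev. is_evol E ev \<and> initial ev = A \<and> terminal ev = B)"

definition isotypic :: "('v,'e) quiver \<Rightarrow> 'v \<Rightarrow> 'v \<Rightarrow> bool" where
  "isotypic E A B \<longleftrightarrow> ancestor E A B \<and> ancestor E B A"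

definition primitive :: "('v,'e) quiver \<Rightarrow> 'v \<Rightarrow> bool" where
  "primitive E A \<longleftrightarrow> (\<forall>B. ancestor E B A \<longrightarrow> isotypic E B A)"

definition full_evol :: "('v,'e) quiver \<Rightarrow> 'v \<Rightarrow> ('v,'e) evolution \<Rightarrow> bool" where
  "full_evol E X ev \<longleftrightarrow> is_evol E ev \<and> primitive E (initial ev) \<and> terminal ev = X"

text \<open>Height: least length of a full evolution; \<infinity> (= Inf of the empty set) if none.\<close>
definition height :: "('v,'e) quiver \<Rightarrow> 'v \<Rightarrow> enat" where
  "height E X = Inf {enat (evlen ev) | ev. full_evol E X ev}"

definition embeds :: "('v,'e) quiver \<Rightarrow> ('v,'e) evolution \<Rightarrow> ('v,'e) evolution \<Rightarrow> bool" where
  "embeds E \<alpha> \<beta> \<longleftrightarrow> evlen \<alpha> \<le> evlen \<beta> \<and>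
     (\<exists>r :: nat \<Rightarrow> nat. (\<forall>k < evlen \<alpha>. r k < r (Suc k)) \<and> r (evlen \<alpha>) \<le> evlen \<beta> \<and>
        (\<forall>k \<le> evlen \<alpha>. isotypic E (vtx \<alpha> k) (vtx \<beta> (r k))))"

definition universal_evol :: "('v,'e) quiver \<Rightarrow> 'v \<Rightarrow> ('v,'e) evolution \<Rightarrow> bool" where
  "universal_evol E X ev \<longleftrightarrow> full_evol E X ev \<and> (\<forall>ev'. full_evol E X ev' \<longrightarrow> embeds E ev ev')"

definition phylogenetic :: "('v,'e) quiver \<Rightarrow> 'v \<Rightarrow> bool" where
  "phylogenetic E X \<longleftrightarrow> (\<exists>ev. universal_evol E X ev)"

definition monotonous :: "('v,'e) quiver \<Rightarrow> bool" where
  "monotonous E \<longleftrightarrow> (\<forall>A B. E A B \<noteq> {} \<longrightarrow> height E A \<ge> height E B)"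

end

theory Submission
  imports Defs
begin

lemma len_fst: "is_evol E ev \<Longrightarrow> length (fst ev) = Suc (evlen ev)"
  unfolding is_evol_def evlen_def by auto

lemma init_vtx: "is_evol E ev \<Longrightarrow> initial ev = vtx ev 0"
  unfolding is_evol_def initial_def vtx_def by (simp add: hd_conv_nth)

lemma term_vtx: "is_evol E ev \<Longrightarrow> terminal ev = vtx ev (evlen ev)"
  using len_fst[of E ev] unfolding is_evol_def terminal_def vtx_def
  by (simp add: last_conv_nth)

lemma evol_edge: "is_evol E ev \<Longrightarrow> k < evlen ev \<Longrightarrow> E (vtx ev (Suc k)) (vtx ev k) \<noteq> {}"
  unfolding is_evol_def evlen_def vtx_def by blast

lemma mono_edge: "monotonous E \<Longrightarrow> E A B \<noteq> {} \<Longrightarrow> height E B \<le> height E A"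
  unfolding monotonous_def by blast

lemma mono_path:
  assumes "monotonous E" "is_evol E ev" "j \<le> evlen ev"
  shows "i \<le> j \<Longrightarrow> height E (vtx ev i) \<le> height E (vtx ev j)"
  using assms(3)
proof (induction j)
  case 0 then show ?case by simp
next
  case (Suc j)
  show ?case
  proof (cases "i = Suc j")
    case True then show ?thesis by simp
  next
    case False
    then have "height E (vtx ev i) \<le> height E (vtx ev j)" using Suc by simp
    also have "\<dots> \<le> height E (vtx ev (Suc j))"
      using mono_edge[OF assms(1) evol_edge[OF assms(2)]] Suc by simp
    finally show ?thesis .
  qed
qed

lemma anc_height: "monotonous E \<Longrightarrow> ancestor E A B \<Longrightarrow> height E A \<le> height E B"
  unfolding ancestor_def using mono_path init_vtx term_vtx
  by (metis le0 order_refl)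

lemma iso_height: "monotonous E \<Longrightarrow> isotypic E A B \<Longrightarrow> height E A = height E B"
  unfolding isotypic_def using anc_height by (metis order_antisym)

lemma height_le: "full_evol E X ev \<Longrightarrow> height E X \<le> enat (evlen ev)"
  unfolding height_def by (rule Inf_lower) blast

lemma height_attained:
  assumes "height E X \<noteq> \<infinity>"
  shows "\<exists>ev. full_evol E X ev \<and> enat (evlen ev) = height E X"
proof -
  let ?S = "{enat (evlen ev) | ev. full_evol E X ev}"
  have ne: "?S \<noteq> {}"
  proof
    assume "?S = {}" then have "height E X = \<infinity>" unfolding height_def by (simp add: top_enat_def)
    then show False using assms by simp
  qed
  obtain x where x: "x \<in> ?S" using ne by blast
  have "Inf ?S = (LEAST x. x \<in> ?S)" using ne by (simp only: Inf_enat_def if_False)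
  moreover have "(LEAST x. x \<in> ?S) \<in> ?S" using x by (rule LeastI)
  ultimately have "Inf ?S \<in> ?S" by simp
  then obtain ev where "full_evol E X ev" "Inf ?S = enat (evlen ev)" by blast
  then show ?thesis unfolding height_def by metis
qed

lemma enat_Suc1: "enat (Suc n) = enat n + 1"
  by (simp add: one_enat_def)

lemma edge_plus1:
  assumes "E A B \<noteq> {}"
  shows "height E A \<le> height E B + 1"
proof (cases "height E B = \<infinity>")
  case True then show ?thesis by simp
next
  case False
  then obtain ev where ev: "full_evol E B ev" "enat (evlen ev) = height E B"
    using height_attained[OF False] by auto
  obtain e where e: "e \<in> E A B" using assms by blast
  define ev' where "ev' = (fst ev @ [A], snd ev @ [e])"
  have ie: "is_evol E ev" using ev(1) unfolding full_evol_def by simp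
  have L: "length (fst ev) = Suc (length (snd ev))" using len_fst[OF ie] by (simp add: evlen_def)
  have tB: "last (fst ev) = B" using ev(1) unfolding full_evol_def terminal_def by simp
  have vs: "fst ev' = fst ev @ [A]" and es: "snd ev' = snd ev @ [e]" unfolding ev'_def by simp_all
  have "is_evol E ev'"
    unfolding is_evol_def
  proof (intro conjI allI impI)
    show "fst ev' \<noteq> []" using vs by simp
    show "length (snd ev') = length (fst ev') - 1" using vs es L by simp
    fix k assume k: "k < length (snd ev')"
    show "snd ev' ! k \<in> E (fst ev' ! Suc k) (fst ev' ! k)"
    proof (cases "k < length (snd ev)")
      case True
      then have "snd ev ! k \<in> E (fst ev ! Suc k) (fst ev ! k)" using ie unfolding is_evol_def by blast
      then show ?thesis using True L unfolding vs es by (simp add: nth_append)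
    next
      case False
      then have kk: "k = length (snd ev)" using k es by simp
      have ne: "fst ev \<noteq> []" using L by auto
      have "fst ev ! k = B" using tB L kk last_conv_nth[OF ne] by simp
      then show ?thesis using e L kk unfolding vs es by (simp add: nth_append)
    qed
  qed
  moreover have "initial ev' = initial ev"
    unfolding ev'_def initial_def using L by (cases "fst ev") auto
  moreover have "terminal ev' = A" unfolding ev'_def terminal_def by simp
  ultimately have "full_evol E A ev'" using ev(1) unfolding full_evol_def by simp
  then have "height E A \<le> enat (evlen ev')" by (rule height_le)
  also have "evlen ev' = evlen ev + 1" unfolding ev'_def evlen_def by simp
  finally show ?thesis using ev(2) by (simp only: enat_Suc1 Suc_eq_plus1[symmetric])
qed

lemma path_height_le:
  assumes "full_evol E Z ev"
  shows "i \<le> evlen ev \<Longrightarrow> height E (vtx ev i) \<le> enat i"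
proof (induction i)
  case 0
  have ie: "is_evol E ev" using assms unfolding full_evol_def by simp
  let ?A = "vtx ev 0"
  have "is_evol E ([?A], [])" unfolding is_evol_def by simp
  then have "full_evol E ?A ([?A], [])"
    using assms init_vtx[OF ie] unfolding full_evol_def initial_def terminal_def by simp
  then have "height E ?A \<le> enat (evlen ([?A], [] :: 'b list))" by (rule height_le)
  then show ?case by (simp add: evlen_def zero_enat_def)
next
  case (Suc i)
  have ie: "is_evol E ev" using assms unfolding full_evol_def by simp
  have "height E (vtx ev (Suc i)) \<le> height E (vtx ev i) + 1"
  proof -
    have ii: "i < evlen ev" using Suc by simp
    show ?thesis using edge_plus1[of E, OF evol_edge[OF ie ii]] by simp
  qed
  also have "\<dots> \<le> enat i + 1" using Suc by (simp add: add_right_mono)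
  finally show ?case by (simp only: enat_Suc1)
qed

lemma path_height_ge:
  assumes "is_evol E ev" "j \<le> evlen ev"
  shows "i \<le> j \<Longrightarrow> height E (vtx ev j) \<le> height E (vtx ev i) + enat (j - i)"
  using assms(2)
proof (induction j)
  case 0 then show ?case by simp
next
  case (Suc j)
  show ?case
  proof (cases "i = Suc j")
    case True then show ?thesis by (simp add: zero_enat_def[symmetric])
  next
    case False
    then have ij: "i \<le> j" using Suc by simp
    have "height E (vtx ev (Suc j)) \<le> height E (vtx ev j) + 1"
    proof -
      have jj: "j < evlen ev" using Suc by simp
      show ?thesis using edge_plus1[of E, OF evol_edge[OF assms(1) jj]] by simp
    qed
    also have "\<dots> \<le> height E (vtx ev i) + enat (j - i) + 1"
      using Suc ij by (simp add: add_right_mono)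
    also have "\<dots> = height E (vtx ev i) + enat (Suc j - i)"
      using ij by (simp add: add.assoc one_enat_def Suc_diff_le)
    finally show ?thesis .
  qed
qed

lemma univ_len:
  assumes "universal_evol E X \<alpha>"
  shows "height E X = enat (evlen \<alpha>)"
proof -
  have f: "full_evol E X \<alpha>" using assms unfolding universal_evol_def by simp
  have le: "height E X \<le> enat (evlen \<alpha>)" by (rule height_le[OF f])
  have fin: "height E X \<noteq> \<infinity>" using le by (metis enat_ord_simps(5) infinity_ileE)
  obtain ev where ev: "full_evol E X ev" "enat (evlen ev) = height E X"
    using height_attained[OF fin] by auto
  have "embeds E \<alpha> ev" using assms ev(1) unfolding universal_evol_def by blast
  then have "evlen \<alpha> \<le> evlen ev" unfolding embeds_def by simp
  then show ?thesis using le ev(2) by (metis antisym enat_ord_simps(1))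
qed

lemma univ_heights:
  assumes "universal_evol E X \<alpha>" "i \<le> evlen \<alpha>"
  shows "height E (vtx \<alpha> i) = enat i"
proof -
  have f: "full_evol E X \<alpha>" using assms unfolding universal_evol_def by simp
  have ie: "is_evol E \<alpha>" using f unfolding full_evol_def by simp
  have le: "height E (vtx \<alpha> i) \<le> enat i" using path_height_le[OF f assms(2)] .
  have "height E (vtx \<alpha> (evlen \<alpha>)) = enat (evlen \<alpha>)"
    using univ_len[OF assms(1)] f term_vtx[OF ie] unfolding full_evol_def by simp
  moreover have "height E (vtx \<alpha> (evlen \<alpha>)) \<le> height E (vtx \<alpha> i) + enat (evlen \<alpha> - i)"
    using path_height_ge[OF ie order_refl assms(2)] .
  ultimately have "enat (evlen \<alpha>) \<le> height E (vtx \<alpha> i) + enat (evlen \<alpha> - i)" by simp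
  then have "enat i \<le> height E (vtx \<alpha> i)" using assms(2)
    by (cases "height E (vtx \<alpha> i)") auto
  then show ?thesis using le by simp
qed

lemma concat_evol:
  assumes a: "is_evol E \<alpha>" and g: "is_evol E \<gamma>" and t: "terminal \<alpha> = initial \<gamma>"
  defines "\<delta> \<equiv> (fst \<alpha> @ tl (fst \<gamma>), snd \<alpha> @ snd \<gamma>)"
  shows "is_evol E \<delta>" "evlen \<delta> = evlen \<alpha> + evlen \<gamma>"
    "\<And>i. i \<le> evlen \<alpha> + evlen \<gamma> \<Longrightarrow> vtx \<delta> i = (if i \<le> evlen \<alpha> then vtx \<alpha> i else vtx \<gamma> (i - evlen \<alpha>))"
    "initial \<delta> = initial \<alpha>" "terminal \<delta> = terminal \<gamma>"
proof -
  have La: "length (fst \<alpha>) = Suc (evlen \<alpha>)" using len_fst[OF a] .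
  have Lg: "length (fst \<gamma>) = Suc (evlen \<gamma>)" using len_fst[OF g] .
  have tv: "vtx \<alpha> (evlen \<alpha>) = vtx \<gamma> 0" using t term_vtx[OF a] init_vtx[OF g] by simp
  show V: "vtx \<delta> i = (if i \<le> evlen \<alpha> then vtx \<alpha> i else vtx \<gamma> (i - evlen \<alpha>))"
    if "i \<le> evlen \<alpha> + evlen \<gamma>" for i
  proof (cases "i \<le> evlen \<alpha>")
    case True then show ?thesis unfolding \<delta>_def vtx_def using La by (simp add: nth_append)
  next
    case False
    then have "i - Suc (evlen \<alpha>) < length (tl (fst \<gamma>))" using that Lg by simp
    then show ?thesis using False La Lg unfolding \<delta>_def vtx_def
      by (simp add: nth_append nth_tl Suc_diff_Suc not_le)
  qed
  show EL: "evlen \<delta> = evlen \<alpha> + evlen \<gamma>" unfolding \<delta>_def evlen_def by simp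
  have Ld: "length (fst \<delta>) = Suc (evlen \<delta>)" unfolding \<delta>_def using La Lg EL
    by (simp add: evlen_def)
  show "is_evol E \<delta>"
    unfolding is_evol_def
  proof (intro conjI allI impI)
    show "fst \<delta> \<noteq> []" unfolding \<delta>_def using La by auto
    show "length (snd \<delta>) = length (fst \<delta>) - 1" using Ld by (simp add: evlen_def)
    fix k assume k: "k < length (snd \<delta>)"
    then have k': "k < evlen \<alpha> + evlen \<gamma>" using EL by (simp add: evlen_def)
    have vd: "fst \<delta> ! j = vtx \<delta> j" for j by (simp add: vtx_def)
    show "snd \<delta> ! k \<in> E (fst \<delta> ! Suc k) (fst \<delta> ! k)"
    proof (cases "k < evlen \<alpha>")
      case True
      have "snd \<alpha> ! k \<in> E (vtx \<alpha> (Suc k)) (vtx \<alpha> k)"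
        using a True unfolding is_evol_def vtx_def evlen_def by blast
      then show ?thesis using True k' V[of k] V[of "Suc k"] unfolding vd
        by (simp add: \<delta>_def nth_append evlen_def)
    next
      case False
      then have kg: "k - evlen \<alpha> < evlen \<gamma>" using k' by simp
      have "snd \<gamma> ! (k - evlen \<alpha>) \<in> E (vtx \<gamma> (Suc (k - evlen \<alpha>))) (vtx \<gamma> (k - evlen \<alpha>))"
        using g kg unfolding is_evol_def vtx_def evlen_def by blast
      moreover have "vtx \<delta> k = vtx \<gamma> (k - evlen \<alpha>)"
        using V[of k] k' False tv by (cases "k = evlen \<alpha>") auto
      moreover have "vtx \<delta> (Suc k) = vtx \<gamma> (Suc (k - evlen \<alpha>))"
        using V[of "Suc k"] k' False by (simp add: Suc_diff_le)
      ultimately show ?thesis using False unfolding vd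
        by (simp add: \<delta>_def nth_append evlen_def)
    qed
  qed
  show "initial \<delta> = initial \<alpha>" unfolding \<delta>_def initial_def using La by (cases "fst \<alpha>") auto
  show "terminal \<delta> = terminal \<gamma>"
  proof -
    have "terminal \<delta> = vtx \<delta> (evlen \<delta>)" using term_vtx[OF \<open>is_evol E \<delta>\<close>] .
    also have "\<dots> = vtx \<gamma> (evlen \<gamma>)" using V[of "evlen \<delta>"] EL tv
      by (cases "evlen \<gamma> = 0") auto
    finally show ?thesis using term_vtx[OF g] by simp
  qed
qed

lemma iso_sym: "isotypic E A B \<Longrightarrow> isotypic E B A"
  unfolding isotypic_def by simp

theorem corollary6p4:
  fixes E :: "('v,'e) quiver"
  assumes "monotonous E"
    and "phylogenetic E X" and "phylogenetic E Y"
    and "isotypic E X Y"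
    and "universal_evol E X \<alpha>" and "universal_evol E Y \<beta>"
  shows "evlen \<alpha> = evlen \<beta> \<and> (\<forall>k \<le> evlen \<alpha>. isotypic E (vtx \<alpha> k) (vtx \<beta> k))"
proof -
  have fa: "full_evol E X \<alpha>" and fb: "full_evol E Y \<beta>"
    using assms(5,6) unfolding universal_evol_def by auto
  have ia: "is_evol E \<alpha>" and ib: "is_evol E \<beta>" using fa fb unfolding full_evol_def by auto
  have hXY: "height E X = height E Y" using iso_height[OF assms(1,4)] .
  have len: "evlen \<alpha> = evlen \<beta>"
    using univ_len[OF assms(5)] univ_len[OF assms(6)] hXY by simp
  define m where "m = evlen \<alpha>"
  obtain \<gamma> where g: "is_evol E \<gamma>" "initial \<gamma> = X" "terminal \<gamma> = Y"
    using assms(4) unfolding isotypic_def ancestor_def by blast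
  have t: "terminal \<alpha> = initial \<gamma>" using fa g unfolding full_evol_def by simp
  define \<delta> where "\<delta> = (fst \<alpha> @ tl (fst \<gamma>), snd \<alpha> @ snd \<gamma>)"
  note C = concat_evol[OF ia g(1) t, folded \<delta>_def]
  have fd: "full_evol E Y \<delta>" using C fa g unfolding full_evol_def by simp
  have "embeds E \<beta> \<delta>" using assms(6) fd unfolding universal_evol_def by blast
  then obtain r where r: "\<forall>k < evlen \<beta>. r k < r (Suc k)" "r (evlen \<beta>) \<le> evlen \<delta>"
    "\<forall>k \<le> evlen \<beta>. isotypic E (vtx \<beta> k) (vtx \<delta> (r k))"
    unfolding embeds_def by blast
  have rge: "k \<le> evlen \<beta> \<Longrightarrow> k \<le> r k" for k
  proof (induction k)
    case 0 then show ?case by simp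
  next
    case (Suc k)
    have kl: "k < evlen \<beta>" using Suc.prems by simp
    have "r k < r (Suc k)" using r(1) kl by blast
    moreover have "k \<le> r k" using Suc.IH kl by simp
    ultimately show ?case by simp
  qed
  have rmono': "k \<le> j \<Longrightarrow> j \<le> evlen \<beta> \<Longrightarrow> r k \<le> r j" for k j
  proof (induction j)
    case 0 then show ?case by simp
  next
    case (Suc j)
    show ?case
    proof (cases "k = Suc j")
      case True then show ?thesis by simp
    next
      case False
      then have "r k \<le> r j" using Suc by simp
      moreover have "r j < r (Suc j)" using r(1) Suc.prems by simp
      ultimately show ?thesis by simp
    qed
  qed
  have rmono: "k \<le> evlen \<beta> \<Longrightarrow> r k \<le> r (evlen \<beta>)" for k using rmono' by simp
  have hm: "height E (vtx \<delta> m) = enat m"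
    using C(3)[of m] univ_heights[OF assms(5), of m] unfolding m_def by simp
  have main: "isotypic E (vtx \<alpha> k) (vtx \<beta> k)" if k: "k \<le> m" for k
  proof (cases "k = m")
    case True
    then show ?thesis using assms(4) fa fb term_vtx[OF ia] term_vtx[OF ib] len m_def
      unfolding full_evol_def by simp
  next
    case False
    then have km: "k < m" using k by simp
    have kb: "k \<le> evlen \<beta>" using k len m_def by simp
    have iso: "isotypic E (vtx \<beta> k) (vtx \<delta> (r k))" using r(3) kb by simp
    have rle: "r k \<le> m + evlen \<gamma>" using rmono[OF kb] r(2) C(2) m_def by simp
    have hk: "height E (vtx \<delta> (r k)) = enat k"
      using iso_height[OF assms(1) iso] univ_heights[OF assms(6) kb] by simp
    have "r k = k"
    proof (rule ccontr)
      assume "r k \<noteq> k"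
      then have gt: "r k > k" using rge[OF kb] by simp
      show False
      proof (cases "r k \<le> m")
        case True
        then have "height E (vtx \<delta> (r k)) = enat (r k)"
          using C(3)[of "r k"] rle univ_heights[OF assms(5), of "r k"] m_def by simp
        then show False using hk gt by simp
      next
        case False
        have "height E (vtx \<delta> m) \<le> height E (vtx \<delta> (r k))"
          using mono_path[OF assms(1) C(1), of "r k" m] rle False C(2) m_def by simp
        then show False using hm hk km by simp
      qed
    qed
    then have "isotypic E (vtx \<beta> k) (vtx \<alpha> k)" using iso C(3)[of k] k m_def by simp
    then show ?thesis by (rule iso_sym)
  qed
  show ?thesis using len main m_def by simp
qed

end
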